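(* Let $f:U\to\mathbb{R}^{n+1}$ ($U\subset\mathbb{R}^n$ open) be an immersed isothermic$_k$ hypersurface in line of curvature co-ordinates $x=(x_1,\dots,x_n)$ with fundamental forms $\mathrm{I}=\sum_{i=1}^nu_i^2\mathrm{d} x_i^2$ and $\mathrm{II}=\sum_{i=1}^nu_ih_i\,\mathrm{d} x_i^2$, where $\vec u=(u_1,\dots,u_n)^T$ satisfies $(\vec u,\vec u)_k=0$. Define $F=(f_{ij})$ and $\gamma=(\gamma_1,\dots,\gamma_n)^T$ by $f_{ij}=-\epsilon_i\frac{(u_i)_{x_j}}{u_j}$ for $i\neq j$, $f_{ii}=0$, and $\gamma_i=\epsilon_ih_i$. Then (a) the $\mathfrak{o}(n+1)$-valued $1$-form $\omega=\begin{pmatrix}-\delta JF+F^TJ\delta&-\delta J\gamma\\ \gamma^TJ\delta&0\end{pmatrix}$ is flat, i.e. $\mathrm{d}\omega+\omega\wedge\omega=0$; (b) $\mathrm{d}\vec u^T=\vec u^T\tau$, where $\tau=-\delta F^TJ+F\delta J$.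
   Context: Fix integers $n\ge2$, $1\le k\le n-1$. Let $\epsilon_i=1$ for $i\le n-k$, $\epsilon_i=-1$ for $n-k<i\le n$, $J=\operatorname{diag}(\epsilon_1,\dots,\epsilon_n)$, $(\vec x,\vec y)_k=\vec x^TJ\vec y$, and $\delta=\operatorname{diag}(\mathrm{d} x_1,\dots,\mathrm{d} x_n)$. A hypersurface in $\mathbb{R}^{n+1}$ is isothermic$_k$ if it is parametrised by line of curvature co-ordinates (both fundamental forms diagonal) and its induced metric $\sum g_{ii}\mathrm{d} x_i^2$ is Guichard$_k$, i.e. $\sum_{i=1}^{n-k}g_{ii}=\sum_{i=n-k+1}^ng_{ii}$. The second fundamental form is taken with respect to a chosen unit normal field. *)

theory Defs
  imports "HOL-Analysis.Analysis"
begin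

text \<open>Coordinates on the parameter domain U \<subseteq> R^n are indexed by a finite type 'n;
  the numbering x_1..x_n of the coordinates is given by a bijection idx : 'n -> {0..<n}
  (coordinate i is x_{idx i + 1}).  Points of R^{n+1} live in real^'m with CARD('m) = n+1.
  (n+1)x(n+1) matrices are indexed by 'n option, None being the last row/column.\<close>

definition partial :: "'n::finite \<Rightarrow> (real^'n \<Rightarrow> 'b::real_normed_vector) \<Rightarrow> real^'n \<Rightarrow> 'b" where
  "partial j g x = vector_derivative (\<lambda>t. g (x + t *\<^sub>R axis j 1)) (at 0)"

fun pds :: "'n::finite list \<Rightarrow> (real^'n \<Rightarrow> 'b::real_normed_vector) \<Rightarrow> real^'n \<Rightarrow> 'b" where
  "pds [] g = g"
| "pds (j # js) g = partial j (pds js g)"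

definition smooth_on :: "(real^'n::finite) set \<Rightarrow> (real^'n \<Rightarrow> 'b::real_normed_vector) \<Rightarrow> bool" where
  "smooth_on U g \<longleftrightarrow> (\<forall>js. continuous_on U (pds js g) \<and>
      (\<forall>j. \<forall>x\<in>U. (\<lambda>t. pds js g (x + t *\<^sub>R axis j 1)) differentiable (at 0)))"

definition eps :: "('n::finite \<Rightarrow> nat) \<Rightarrow> nat \<Rightarrow> 'n \<Rightarrow> real" where
  "eps idx k i = (if idx i < CARD('n) - k then 1 else -1)"

definition Jm :: "('n::finite \<Rightarrow> nat) \<Rightarrow> nat \<Rightarrow> real^'n^'n" where
  "Jm idx k = (\<chi> i l. if i = l then eps idx k i else 0)"

text \<open>Coefficient of dx_j in delta = diag(dx_1,...,dx_n).\<close>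
definition Ej :: "'n::finite \<Rightarrow> real^'n^'n" where
  "Ej j = (\<chi> i l. if i = l \<and> i = j then 1 else 0)"

definition Fm :: "('n::finite \<Rightarrow> nat) \<Rightarrow> nat \<Rightarrow> ('n \<Rightarrow> real^'n \<Rightarrow> real) \<Rightarrow> real^'n \<Rightarrow> real^'n^'n" where
  "Fm idx k u x = (\<chi> i j. if i = j then 0 else - eps idx k i * partial j (u i) x / u j x)"

definition gam :: "('n::finite \<Rightarrow> nat) \<Rightarrow> nat \<Rightarrow> ('n \<Rightarrow> real^'n \<Rightarrow> real) \<Rightarrow> real^'n \<Rightarrow> real^'n" where
  "gam idx k h x = (\<chi> i. eps idx k i * h i x)"

definition block :: "real^'n::finite^'n \<Rightarrow> real^'n \<Rightarrow> real^'n \<Rightarrow> real^'n option^'n option" where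
  "block A v w = (\<chi> a b. case (a, b) of
       (Some i, Some l) \<Rightarrow> A $ i $ l
     | (Some i, None) \<Rightarrow> v $ i
     | (None, Some l) \<Rightarrow> w $ l
     | (None, None) \<Rightarrow> 0)"

text \<open>omega = sum_j omega_j dx_j with
  omega_j = [[-E_j J F + F^T J E_j, -E_j J gamma], [gamma^T J E_j, 0]].\<close>
definition omega :: "('n::finite \<Rightarrow> nat) \<Rightarrow> nat \<Rightarrow> ('n \<Rightarrow> real^'n \<Rightarrow> real) \<Rightarrow> ('n \<Rightarrow> real^'n \<Rightarrow> real)
    \<Rightarrow> 'n \<Rightarrow> real^'n \<Rightarrow> real^'n option^'n option" where
  "omega idx k u h j x = block
      (- (Ej j ** Jm idx k ** Fm idx k u x) + transpose (Fm idx k u x) ** Jm idx k ** Ej j)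
      (- ((Ej j ** Jm idx k) *v gam idx k h x))
      (gam idx k h x v* (Jm idx k ** Ej j))"

text \<open>tau = sum_j tau_j dx_j with tau_j = -E_j F^T J + F E_j J.\<close>
definition tau :: "('n::finite \<Rightarrow> nat) \<Rightarrow> nat \<Rightarrow> ('n \<Rightarrow> real^'n \<Rightarrow> real) \<Rightarrow> 'n \<Rightarrow> real^'n \<Rightarrow> real^'n^'n" where
  "tau idx k u j x = - (Ej j ** transpose (Fm idx k u x) ** Jm idx k) + Fm idx k u x ** Ej j ** Jm idx k"

end

theory Submission
  imports Defs
begin

definition hasp :: "'n::finite \<Rightarrow> (real^'n \<Rightarrow> 'b::real_normed_vector) \<Rightarrow> real^'n \<Rightarrow> 'b \<Rightarrow> bool" where
  "hasp j G y D \<longleftrightarrow> ((\<lambda>t. G (y + t *\<^sub>R axis j 1)) has_vector_derivative D) (at 0)"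

lemma hasp_partial: "hasp j G y D \<Longrightarrow> partial j G y = D"
  unfolding hasp_def partial_def by (rule vector_derivative_at)

lemma open_line: fixes y :: "real^'n::finite" shows "open U \<Longrightarrow> open {t::real. y + t *\<^sub>R axis j 1 \<in> U}"
proof -
  assume "open U"
  have "open ((\<lambda>t::real. y + t *\<^sub>R axis j (1::real)) -` U)"
    by (rule continuous_open_vimage[OF \<open>open U\<close>]) (intro continuous_intros)
  then show ?thesis by (simp add: vimage_def)
qed

lemma hasp_cong:
  assumes "open U" "y \<in> U" "\<And>z. z \<in> U \<Longrightarrow> G z = H z" "hasp j G y D"
  shows "hasp j H y D"
  using assms(4) unfolding hasp_def
  by (rule has_vector_derivative_transform_within_open[OF _ open_line[OF assms(1)]])
     (use assms in auto)

lemma partial_cong: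
  assumes "open U" "y \<in> U" "\<And>z. z \<in> U \<Longrightarrow> G z = H z"
  shows "partial j G y = partial j H y"
  unfolding partial_def
proof (rule vector_derivative_cong_eq)
  show "\<forall>\<^sub>F t in nhds 0. t \<in> UNIV \<longrightarrow> G (y + t *\<^sub>R axis j 1) = H (y + t *\<^sub>R axis j 1)"
    unfolding eventually_nhds
    by (rule exI[of _ "{t::real. y + t *\<^sub>R axis j 1 \<in> U}"]) (use assms open_line in auto)
qed auto

lemma hasp_inner:
  fixes G H :: "real^'n::finite \<Rightarrow> 'b::real_inner"
  shows "hasp j G y D \<Longrightarrow> hasp j H y E \<Longrightarrow> hasp j (\<lambda>z. G z \<bullet> H z) y (G y \<bullet> E + D \<bullet> H y)"
  unfolding hasp_def
  using bounded_bilinear.has_vector_derivative[OF bounded_bilinear_inner] by fastforce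

lemma hasp_scaleR:
  fixes G :: "real^'n::finite \<Rightarrow> 'b::real_normed_vector"
  shows "hasp j s y D \<Longrightarrow> hasp j G y E \<Longrightarrow> hasp j (\<lambda>z. s z *\<^sub>R G z) y (s y *\<^sub>R E + D *\<^sub>R G y)"
  unfolding hasp_def
  using bounded_bilinear.has_vector_derivative[OF bounded_bilinear_scaleR] by fastforce

lemma hasp_mult:
  fixes s r :: "real^'n::finite \<Rightarrow> real"
  shows "hasp j s y D \<Longrightarrow> hasp j r y E \<Longrightarrow> hasp j (\<lambda>z. s z * r z) y (s y * E + D * r y)"
  using hasp_scaleR[of j s y D r E] by simp

lemma hasp_add:
  "hasp j G y D \<Longrightarrow> hasp j H y E \<Longrightarrow> hasp j (\<lambda>z. G z + H z) y (D + E)"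
  unfolding hasp_def by (rule has_vector_derivative_add)

lemma hasp_diff:
  "hasp j G y D \<Longrightarrow> hasp j H y E \<Longrightarrow> hasp j (\<lambda>z. G z - H z) y (D - E)"
  unfolding hasp_def by (rule has_vector_derivative_diff)

lemma hasp_minus:
  "hasp j G y D \<Longrightarrow> hasp j (\<lambda>z. - G z) y (- D)"
  unfolding hasp_def by (rule has_vector_derivative_minus)

lemma hasp_const: "hasp j (\<lambda>z. c) y 0"
  unfolding hasp_def by (rule has_vector_derivative_const)

lemma hasp_sum:
  "(\<And>i. i \<in> I \<Longrightarrow> hasp j (G i) y (D i)) \<Longrightarrow> hasp j (\<lambda>z. \<Sum>i\<in>I. G i z) y (\<Sum>i\<in>I. D i)"
  unfolding hasp_def by (rule has_vector_derivative_sum)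

lemma hasp_inv:
  fixes s :: "real^'n::finite \<Rightarrow> real"
  assumes "hasp j s y D" "s y \<noteq> 0"
  shows "hasp j (\<lambda>z. 1 / s z) y (- D / (s y)^2)"
proof -
  have "((\<lambda>t. s (y + t *\<^sub>R axis j 1)) has_field_derivative D) (at 0)"
    using assms(1) unfolding hasp_def has_real_derivative_iff_has_vector_derivative .
  then have "((\<lambda>t. inverse (s (y + t *\<^sub>R axis j 1))) has_field_derivative
      - (inverse (s y) * D * inverse (s y))) (at 0)"
    using DERIV_inverse'[OF _ , of "\<lambda>t. s (y + t *\<^sub>R axis j 1)" D 0 UNIV] assms(2) by simp
  moreover have "- (inverse (s y) * D * inverse (s y)) = - D / (s y)^2"
    by (simp add: power2_eq_square divide_inverse)
  ultimately show ?thesis unfolding hasp_def has_real_derivative_iff_has_vector_derivative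
    by (simp add: divide_inverse)
qed

lemma hasp_line:
  assumes "hasp j g (y + \<sigma> *\<^sub>R axis j 1) D"
  shows "((\<lambda>s. g (y + s *\<^sub>R axis j 1)) has_vector_derivative D) (at \<sigma>)"
proof -
  have 1: "((\<lambda>s::real. s - \<sigma>) has_vector_derivative 1) (at \<sigma>)"
    by (auto intro!: derivative_eq_intros)
  have 2: "((\<lambda>t. g ((y + \<sigma> *\<^sub>R axis j 1) + t *\<^sub>R axis j 1)) has_vector_derivative D) (at ((\<lambda>s. s - \<sigma>) \<sigma>))"
    using assms by (simp add: hasp_def)
  have "((\<lambda>t. g ((y + \<sigma> *\<^sub>R axis j 1) + t *\<^sub>R axis j 1)) \<circ> (\<lambda>s. s - \<sigma>)) = (\<lambda>s. g (y + s *\<^sub>R axis j 1))"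
    by (auto simp: o_def algebra_simps)
  with vector_diff_chain_at[OF 1 2] show ?thesis by simp
qed

lemma hasp_shift: "hasp j g (y + c) D \<Longrightarrow> hasp j (\<lambda>z. g (z + c)) y D"
  unfolding hasp_def by (simp add: ac_simps)

lemma mvt_line:
  fixes \<phi> :: "real^'n::finite \<Rightarrow> real"
  assumes "0 < h" "\<And>\<sigma>. 0 \<le> \<sigma> \<Longrightarrow> \<sigma> \<le> h \<Longrightarrow> hasp j \<phi> (p + \<sigma> *\<^sub>R axis j 1) (\<phi>' (p + \<sigma> *\<^sub>R axis j 1))"
  shows "\<exists>\<sigma>. 0 < \<sigma> \<and> \<sigma> < h \<and> \<phi> (p + h *\<^sub>R axis j 1) - \<phi> p = h * \<phi>' (p + \<sigma> *\<^sub>R axis j 1)"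
proof -
  have "\<exists>z. 0 < z \<and> z < h \<and> (\<phi> (p + h *\<^sub>R axis j 1) - \<phi> (p + 0 *\<^sub>R axis j 1) = (h - 0) * \<phi>' (p + z *\<^sub>R axis j 1))"
  proof (rule MVT2[OF assms(1)])
    fix s :: real assume "0 \<le> s" "s \<le> h"
    then show "((\<lambda>s. \<phi> (p + s *\<^sub>R axis j 1)) has_real_derivative \<phi>' (p + s *\<^sub>R axis j 1)) (at s)"
      using hasp_line[OF assms(2)] unfolding has_real_derivative_iff_has_vector_derivative by blast
  qed
  then show ?thesis by simp
qed

lemma schwarz_real:
  fixes g :: "real^'n::finite \<Rightarrow> real"
  assumes U: "open U" and x: "x \<in> U"
    and A: "\<And>y. y\<in>U \<Longrightarrow> hasp j g y (partial j g y)"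
    and B: "\<And>y. y\<in>U \<Longrightarrow> hasp l g y (partial l g y)"
    and C: "\<And>y. y\<in>U \<Longrightarrow> hasp l (partial j g) y (partial l (partial j g) y)"
    and D: "\<And>y. y\<in>U \<Longrightarrow> hasp j (partial l g) y (partial j (partial l g) y)"
    and cC: "continuous_on U (partial l (partial j g))"
    and cD: "continuous_on U (partial j (partial l g))"
  shows "partial l (partial j g) x = partial j (partial l g) x"
proof (rule ccontr)
  define a where "a = partial l (partial j g)"
  define b where "b = partial j (partial l g)"
  define e1 where "e1 = axis j (1::real)"
  define e2 where "e2 = axis l (1::real)"
  assume ne: "partial l (partial j g) x \<noteq> partial j (partial l g) x"
  define \<epsilon> where "\<epsilon> = \<bar>a x - b x\<bar> / 2"
  have \<epsilon>: "\<epsilon> > 0" using ne by (simp add: \<epsilon>_def a_def b_def)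
  obtain d1 where d1: "d1 > 0" "\<And>y. y \<in> U \<Longrightarrow> dist y x < d1 \<Longrightarrow> dist (a y) (a x) < \<epsilon>"
    using cC x \<epsilon> unfolding continuous_on_iff a_def by metis
  obtain d2 where d2: "d2 > 0" "\<And>y. y \<in> U \<Longrightarrow> dist y x < d2 \<Longrightarrow> dist (b y) (b x) < \<epsilon>"
    using cD x \<epsilon> unfolding continuous_on_iff b_def by metis
  obtain r where r: "r > 0" "ball x r \<subseteq> U" using U x open_contains_ball by blast
  define h where "h = min r (min d1 d2) / 3"
  have h: "h > 0" using r d1 d2 by (simp add: h_def)
  have dd: "dist (x + s *\<^sub>R e1 + t *\<^sub>R e2) x < min r (min d1 d2)"
    if "0 \<le> s" "s \<le> h" "0 \<le> t" "t \<le> h" for s t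
  proof -
    have "dist (x + s *\<^sub>R e1 + t *\<^sub>R e2) x = norm (s *\<^sub>R e1 + t *\<^sub>R e2)"
      by (simp add: dist_norm)
    also have "\<dots> \<le> norm (s *\<^sub>R e1) + norm (t *\<^sub>R e2)" by (rule norm_triangle_ineq)
    also have "\<dots> = s + t" using that by (simp add: e1_def e2_def)
    also have "\<dots> < min r (min d1 d2)" using that h unfolding h_def by linarith
    finally show ?thesis .
  qed
  have inU: "x + s *\<^sub>R e1 + t *\<^sub>R e2 \<in> U"
    if "0 \<le> s" "s \<le> h" "0 \<le> t" "t \<le> h" for s t
    using dd[OF that] r by (auto simp: dist_commute)
  have ad: "dist (a (x + s *\<^sub>R e1 + t *\<^sub>R e2)) (a x) < \<epsilon>"
    if "0 \<le> s" "s \<le> h" "0 \<le> t" "t \<le> h" for s t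
    using d1(2)[OF inU[OF that]] dd[OF that] by simp
  have bd: "dist (b (x + s *\<^sub>R e1 + t *\<^sub>R e2)) (b x) < \<epsilon>"
    if "0 \<le> s" "s \<le> h" "0 \<le> t" "t \<le> h" for s t
    using d2(2)[OF inU[OF that]] dd[OF that] by simp
  define \<Delta> where "\<Delta> = g (x + h *\<^sub>R e1 + h *\<^sub>R e2) - g (x + h *\<^sub>R e1) - g (x + h *\<^sub>R e2) + g x"
  obtain \<sigma>1 where \<sigma>1: "0 < \<sigma>1" "\<sigma>1 < h"
    "(\<lambda>y. g (y + h *\<^sub>R e2) - g y) (x + h *\<^sub>R e1) - (\<lambda>y. g (y + h *\<^sub>R e2) - g y) x
      = h * ((\<lambda>y. partial j g (y + h *\<^sub>R e2) - partial j g y) (x + \<sigma>1 *\<^sub>R e1))"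
  proof -
    have "\<exists>\<sigma>. 0 < \<sigma> \<and> \<sigma> < h \<and> (\<lambda>y. g (y + h *\<^sub>R e2) - g y) (x + h *\<^sub>R axis j 1) - (\<lambda>y. g (y + h *\<^sub>R e2) - g y) x
      = h * ((\<lambda>y. partial j g (y + h *\<^sub>R e2) - partial j g y) (x + \<sigma> *\<^sub>R axis j 1))"
    proof (rule mvt_line[OF h])
      fix \<sigma> :: real assume s: "0 \<le> \<sigma>" "\<sigma> \<le> h"
      have 1: "hasp j g (x + \<sigma> *\<^sub>R e1 + h *\<^sub>R e2) (partial j g (x + \<sigma> *\<^sub>R e1 + h *\<^sub>R e2))"
        using A inU[OF s] h by auto
      have 2: "hasp j g (x + \<sigma> *\<^sub>R e1) (partial j g (x + \<sigma> *\<^sub>R e1))"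
        using A inU[OF s, of 0] h by auto
      show "hasp j (\<lambda>y. g (y + h *\<^sub>R e2) - g y) (x + \<sigma> *\<^sub>R axis j 1)
          ((\<lambda>y. partial j g (y + h *\<^sub>R e2) - partial j g y) (x + \<sigma> *\<^sub>R axis j 1))"
        using hasp_diff[OF hasp_shift[OF 1] 2] by (simp add: e1_def)
    qed
    then show ?thesis using that by (auto simp: e1_def)
  qed
  have \<Delta>1: "\<Delta> = h * (partial j g (x + \<sigma>1 *\<^sub>R e1 + h *\<^sub>R e2) - partial j g (x + \<sigma>1 *\<^sub>R e1))"
    using \<sigma>1(3) by (simp add: \<Delta>_def ac_simps)
  obtain \<tau>1 where \<tau>1: "0 < \<tau>1" "\<tau>1 < h"
    "partial j g ((x + \<sigma>1 *\<^sub>R e1) + h *\<^sub>R axis l 1) - partial j g (x + \<sigma>1 *\<^sub>R e1)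
      = h * a ((x + \<sigma>1 *\<^sub>R e1) + \<tau>1 *\<^sub>R axis l 1)"
  proof -
    have "\<exists>\<tau>. 0 < \<tau> \<and> \<tau> < h \<and> partial j g ((x + \<sigma>1 *\<^sub>R e1) + h *\<^sub>R axis l 1) - partial j g (x + \<sigma>1 *\<^sub>R e1)
      = h * a ((x + \<sigma>1 *\<^sub>R e1) + \<tau> *\<^sub>R axis l 1)"
    proof (rule mvt_line[OF h])
      fix \<tau> :: real assume t: "0 \<le> \<tau>" "\<tau> \<le> h"
      show "hasp l (partial j g) (x + \<sigma>1 *\<^sub>R e1 + \<tau> *\<^sub>R axis l 1) (a (x + \<sigma>1 *\<^sub>R e1 + \<tau> *\<^sub>R axis l 1))"
        using C[OF inU[of \<sigma>1 \<tau>]] \<sigma>1 t unfolding a_def e2_def by auto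
    qed
    then show ?thesis using that by blast
  qed
  have \<Delta>a: "\<Delta> = h * h * a (x + \<sigma>1 *\<^sub>R e1 + \<tau>1 *\<^sub>R e2)"
    using \<Delta>1 \<tau>1(3) by (simp add: e2_def)
  obtain \<tau>2 where \<tau>2: "0 < \<tau>2" "\<tau>2 < h"
    "(\<lambda>y. g (y + h *\<^sub>R e1) - g y) (x + h *\<^sub>R e2) - (\<lambda>y. g (y + h *\<^sub>R e1) - g y) x
      = h * ((\<lambda>y. partial l g (y + h *\<^sub>R e1) - partial l g y) (x + \<tau>2 *\<^sub>R e2))"
  proof -
    have "\<exists>\<sigma>. 0 < \<sigma> \<and> \<sigma> < h \<and> (\<lambda>y. g (y + h *\<^sub>R e1) - g y) (x + h *\<^sub>R axis l 1) - (\<lambda>y. g (y + h *\<^sub>R e1) - g y) x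
      = h * ((\<lambda>y. partial l g (y + h *\<^sub>R e1) - partial l g y) (x + \<sigma> *\<^sub>R axis l 1))"
    proof (rule mvt_line[OF h])
      fix \<sigma> :: real assume s: "0 \<le> \<sigma>" "\<sigma> \<le> h"
      have pt: "x + \<sigma> *\<^sub>R e2 + h *\<^sub>R e1 = x + h *\<^sub>R e1 + \<sigma> *\<^sub>R e2" by (simp add: ac_simps)
      have 1: "hasp l g (x + \<sigma> *\<^sub>R e2 + h *\<^sub>R e1) (partial l g (x + \<sigma> *\<^sub>R e2 + h *\<^sub>R e1))"
        unfolding pt using B inU[of h \<sigma>] s h by auto
      have 2: "hasp l g (x + \<sigma> *\<^sub>R e2) (partial l g (x + \<sigma> *\<^sub>R e2))"
        using B inU[of 0 \<sigma>] s h by auto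
      show "hasp l (\<lambda>y. g (y + h *\<^sub>R e1) - g y) (x + \<sigma> *\<^sub>R axis l 1)
          ((\<lambda>y. partial l g (y + h *\<^sub>R e1) - partial l g y) (x + \<sigma> *\<^sub>R axis l 1))"
        using hasp_diff[OF hasp_shift[OF 1] 2]
        by (simp add: e2_def ac_simps)
    qed
    then show ?thesis using that by (auto simp: e2_def)
  qed
  have \<Delta>2: "\<Delta> = h * (partial l g (x + \<tau>2 *\<^sub>R e2 + h *\<^sub>R e1) - partial l g (x + \<tau>2 *\<^sub>R e2))"
    using \<tau>2(3) by (simp add: \<Delta>_def ac_simps)
  obtain \<sigma>2 where \<sigma>2: "0 < \<sigma>2" "\<sigma>2 < h"
    "partial l g ((x + \<tau>2 *\<^sub>R e2) + h *\<^sub>R axis j 1) - partial l g (x + \<tau>2 *\<^sub>R e2)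
      = h * b ((x + \<tau>2 *\<^sub>R e2) + \<sigma>2 *\<^sub>R axis j 1)"
  proof -
    have "\<exists>\<tau>. 0 < \<tau> \<and> \<tau> < h \<and> partial l g ((x + \<tau>2 *\<^sub>R e2) + h *\<^sub>R axis j 1) - partial l g (x + \<tau>2 *\<^sub>R e2)
      = h * b ((x + \<tau>2 *\<^sub>R e2) + \<tau> *\<^sub>R axis j 1)"
    proof (rule mvt_line[OF h])
      fix \<tau> :: real assume t: "0 \<le> \<tau>" "\<tau> \<le> h"
      have pt: "x + \<tau>2 *\<^sub>R e2 + \<tau> *\<^sub>R axis j 1 = x + \<tau> *\<^sub>R e1 + \<tau>2 *\<^sub>R e2" by (simp add: e1_def ac_simps)
      show "hasp j (partial l g) (x + \<tau>2 *\<^sub>R e2 + \<tau> *\<^sub>R axis j 1) (b (x + \<tau>2 *\<^sub>R e2 + \<tau> *\<^sub>R axis j 1))"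
        unfolding pt b_def using D[OF inU[of \<tau> \<tau>2]] \<tau>2 t by auto
    qed
    then show ?thesis using that by blast
  qed
  have \<Delta>b: "\<Delta> = h * h * b (x + \<sigma>2 *\<^sub>R e1 + \<tau>2 *\<^sub>R e2)"
    using \<Delta>2 \<sigma>2(3) by (simp add: e1_def ac_simps)
  have eq: "a (x + \<sigma>1 *\<^sub>R e1 + \<tau>1 *\<^sub>R e2) = b (x + \<sigma>2 *\<^sub>R e1 + \<tau>2 *\<^sub>R e2)"
    using \<Delta>a \<Delta>b h by simp
  have "dist (a (x + \<sigma>1 *\<^sub>R e1 + \<tau>1 *\<^sub>R e2)) (a x) < \<epsilon>" using ad \<sigma>1 \<tau>1 by simp
  moreover have "dist (b (x + \<sigma>2 *\<^sub>R e1 + \<tau>2 *\<^sub>R e2)) (b x) < \<epsilon>" using bd \<sigma>2 \<tau>2 by simp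
  moreover have aux: "\<And>A a0 b0 :: real. \<bar>A - a0\<bar> < \<bar>a0 - b0\<bar> / 2 \<Longrightarrow> \<bar>A - b0\<bar> < \<bar>a0 - b0\<bar> / 2 \<Longrightarrow> False"
    by (simp add: abs_if split: if_splits)
  ultimately show False using eq unfolding dist_real_def \<epsilon>_def by metis
qed

lemma hasp_unique: "hasp j G y D \<Longrightarrow> hasp j G y E \<Longrightarrow> D = E"
  using hasp_partial by metis

lemma hasp_inner_const:
  fixes G :: "real^'n::finite \<Rightarrow> 'b::real_inner"
  shows "hasp j G y D \<Longrightarrow> hasp j (\<lambda>z. G z \<bullet> v) y (D \<bullet> v)"
  using hasp_inner[OF _ hasp_const, of j G y D v] by simp

lemma pds_append: "pds (js @ [b]) g = pds js (partial b g)"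
  by (induction js) auto

lemma smooth_partial: "smooth_on U g \<Longrightarrow> smooth_on U (partial b g)"
  unfolding smooth_on_def by (metis pds_append)

lemma smooth_hasp: "smooth_on U g \<Longrightarrow> y \<in> U \<Longrightarrow> hasp j (pds js g) y (partial j (pds js g) y)"
  unfolding smooth_on_def hasp_def partial_def
  by (simp add: vector_derivative_works[symmetric])

lemma smooth_hasp0: "smooth_on U g \<Longrightarrow> y \<in> U \<Longrightarrow> hasp j g y (partial j g y)"
  using smooth_hasp[of U g y j "[]"] by simp

lemma smooth_hasp1: "smooth_on U g \<Longrightarrow> y \<in> U \<Longrightarrow> hasp l (partial j g) y (partial l (partial j g) y)"
  using smooth_hasp[of U g y l "[j]"] by simp

lemma smooth_cont2: "smooth_on U g \<Longrightarrow> continuous_on U (partial l (partial j g))"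
  unfolding smooth_on_def by (metis pds.simps)

lemma schwarz_smooth:
  fixes g :: "real^'n::finite \<Rightarrow> 'b::real_inner"
  assumes U: "open U" and g: "smooth_on U g" and x: "x \<in> U"
  shows "partial l (partial j g) x = partial j (partial l g) x"
proof -
  have key: "partial l (partial j g) x \<bullet> v = partial j (partial l g) x \<bullet> v" for v
  proof -
    define gv where "gv = (\<lambda>y. g y \<bullet> v)"
    have p1: "partial i gv y = partial i g y \<bullet> v" if "y \<in> U" for i y
      unfolding gv_def using hasp_inner_const[OF smooth_hasp0[OF g that]] by (rule hasp_partial)
    have h1: "hasp i gv y (partial i gv y)" if "y \<in> U" for i y
      unfolding gv_def using hasp_inner_const[OF smooth_hasp0[OF g that]] p1[OF that] by (simp add: gv_def)
    have h2: "hasp i (partial i' gv) y (partial i (partial i' g) y \<bullet> v)" if "y \<in> U" for i i' y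
      by (rule hasp_cong[OF U that _ hasp_inner_const[OF smooth_hasp1[OF g that]]]) (simp add: p1)
    have p2: "partial i (partial i' gv) y = partial i (partial i' g) y \<bullet> v" if "y \<in> U" for i i' y
      using h2[OF that] by (rule hasp_partial)
    have c: "continuous_on U (partial i (partial i' gv))" for i i'
    proof -
      have "continuous_on U (\<lambda>y. partial i (partial i' g) y \<bullet> v)"
        by (intro continuous_intros smooth_cont2[OF g])
      then show ?thesis using p2 by (metis (mono_tags, lifting) continuous_on_cong)
    qed
    have "partial l (partial j gv) x = partial j (partial l gv) x"
      by (rule schwarz_real[OF U x h1 h1 _ _ c c]) (use h2 p2 in auto)
    then show ?thesis using p2[OF x] by simp
  qed
  have "(partial l (partial j g) x - partial j (partial l g) x) \<bullet> (partial l (partial j g) x - partial j (partial l g) x) = 0"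
    using key[of "partial l (partial j g) x - partial j (partial l g) x"] by (simp add: inner_diff_left)
  then show ?thesis by simp
qed

definition C2 :: "(real^'n::finite) set \<Rightarrow> (real^'n \<Rightarrow> 'b::real_normed_vector) \<Rightarrow> bool" where
  "C2 U G \<longleftrightarrow> (\<forall>y\<in>U. \<forall>j. hasp j G y (partial j G y))
     \<and> (\<forall>y\<in>U. \<forall>j l. hasp l (partial j G) y (partial l (partial j G) y))
     \<and> (\<forall>y\<in>U. \<forall>j l. partial l (partial j G) y = partial j (partial l G) y)"

lemma C2_smooth:
  fixes g :: "real^'n::finite \<Rightarrow> 'b::real_inner"
  shows "open U \<Longrightarrow> smooth_on U g \<Longrightarrow> C2 U g"
  unfolding C2_def using smooth_hasp0 smooth_hasp1 schwarz_smooth by blast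

lemma C2_scaleR:
  fixes G :: "real^'n::finite \<Rightarrow> 'b::real_normed_vector"
  assumes U: "open U" and s: "C2 U s" and G: "C2 U G"
  shows "C2 U (\<lambda>y. s y *\<^sub>R G y)"
proof -
  have h1: "hasp j (\<lambda>y. s y *\<^sub>R G y) y (s y *\<^sub>R partial j G y + partial j s y *\<^sub>R G y)" if "y \<in> U" for j y
    using s G that unfolding C2_def by (intro hasp_scaleR) auto
  have p1: "partial j (\<lambda>y. s y *\<^sub>R G y) y = s y *\<^sub>R partial j G y + partial j s y *\<^sub>R G y" if "y \<in> U" for j y
    using h1[OF that] by (rule hasp_partial)
  have h2: "hasp l (partial j (\<lambda>y. s y *\<^sub>R G y)) y
     ((s y *\<^sub>R partial l (partial j G) y + partial l s y *\<^sub>R partial j G y) +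
      (partial j s y *\<^sub>R partial l G y + partial l (partial j s) y *\<^sub>R G y))" if "y \<in> U" for j l y
  proof (rule hasp_cong[OF U that])
    show "z \<in> U \<Longrightarrow> s z *\<^sub>R partial j G z + partial j s z *\<^sub>R G z = partial j (\<lambda>y. s y *\<^sub>R G y) z" for z
      using p1 by simp
    show "hasp l (\<lambda>z. s z *\<^sub>R partial j G z + partial j s z *\<^sub>R G z) y
     ((s y *\<^sub>R partial l (partial j G) y + partial l s y *\<^sub>R partial j G y) +
      (partial j s y *\<^sub>R partial l G y + partial l (partial j s) y *\<^sub>R G y))"
      using s G that unfolding C2_def by (intro hasp_add hasp_scaleR) auto
  qed
  show ?thesis unfolding C2_def
  proof (intro conjI ballI allI)
    fix y j l assume y: "y \<in> U"
    show "hasp j (\<lambda>y. s y *\<^sub>R G y) y (partial j (\<lambda>y. s y *\<^sub>R G y) y)" using h1[OF y] p1[OF y] by simp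
    show "hasp l (partial j (\<lambda>y. s y *\<^sub>R G y)) y (partial l (partial j (\<lambda>y. s y *\<^sub>R G y)) y)"
      using h2[OF y] hasp_partial[OF h2[OF y]] by simp
    have "partial l G y \<in> UNIV" by simp
    have s1: "partial l (partial j s) y = partial j (partial l s) y" using s y unfolding C2_def by blast
    have s2: "partial l (partial j G) y = partial j (partial l G) y" using G y unfolding C2_def by blast
    show "partial l (partial j (\<lambda>y. s y *\<^sub>R G y)) y = partial j (partial l (\<lambda>y. s y *\<^sub>R G y)) y"
      unfolding hasp_partial[OF h2[OF y, of j l]] hasp_partial[OF h2[OF y, of l j]] s1 s2
      by (simp add: add_ac)
  qed
qed

lemma C2_inv:
  fixes s :: "real^'n::finite \<Rightarrow> real"
  assumes U: "open U" and s: "C2 U s" and nz: "\<And>y. y \<in> U \<Longrightarrow> s y \<noteq> 0"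
  shows "C2 U (\<lambda>y. 1 / s y)"
proof -
  have h1: "hasp j (\<lambda>y. 1 / s y) y (- partial j s y / (s y)^2)" if "y \<in> U" for j y
    using s nz[OF that] that unfolding C2_def by (intro hasp_inv) auto
  have p1: "partial j (\<lambda>y. 1 / s y) y = - (partial j s y * ((1 / s y) * (1 / s y)))" if "y \<in> U" for j y
    using hasp_partial[OF h1[OF that]] by (simp add: power2_eq_square)
  have h2: "hasp l (partial j (\<lambda>y. 1 / s y)) y
     (- (partial j s y * ((1 / s y) * (- partial l s y / (s y)^2) + (- partial l s y / (s y)^2) * (1 / s y))
        + partial l (partial j s) y * ((1 / s y) * (1 / s y))))" if "y \<in> U" for j l y
  proof (rule hasp_cong[OF U that])
    show "z \<in> U \<Longrightarrow> - (partial j s z * ((1 / s z) * (1 / s z))) = partial j (\<lambda>y. 1 / s y) z" for z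
      using p1 by simp
    have hj: "hasp l (partial j s) y (partial l (partial j s) y)" using s that unfolding C2_def by blast
    show "hasp l (\<lambda>z. - (partial j s z * ((1 / s z) * (1 / s z)))) y
     (- (partial j s y * ((1 / s y) * (- partial l s y / (s y)^2) + (- partial l s y / (s y)^2) * (1 / s y))
        + partial l (partial j s) y * ((1 / s y) * (1 / s y))))"
      by (rule hasp_minus[OF hasp_mult[OF hj hasp_mult[OF h1[OF that] h1[OF that]]]])
  qed
  show ?thesis unfolding C2_def
  proof (intro conjI ballI allI)
    fix y j l assume y: "y \<in> U"
    show "hasp j (\<lambda>y. 1 / s y) y (partial j (\<lambda>y. 1 / s y) y)" using h1[OF y] hasp_partial[OF h1[OF y]] by simp
    show "hasp l (partial j (\<lambda>y. 1 / s y)) y (partial l (partial j (\<lambda>y. 1 / s y)) y)"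
      using h2[OF y] hasp_partial[OF h2[OF y]] by simp
    have s1: "partial l (partial j s) y = partial j (partial l s) y" using s y unfolding C2_def by blast
    show "partial l (partial j (\<lambda>y. 1 / s y)) y = partial j (partial l (\<lambda>y. 1 / s y)) y"
      unfolding hasp_partial[OF h2[OF y, of j l]] hasp_partial[OF h2[OF y, of l j]] s1
      by (simp add: algebra_simps)
  qed
qed

lemma bl_axis: "bounded_linear (\<lambda>v::'b::real_inner. axis (a::'a::finite) v)"
proof (rule bounded_linear_intro[where K=1])
  show "axis a (x + y) = axis a x + axis a y" for x y :: 'b by (simp add: axis_def vec_eq_iff)
  show "axis a (r *\<^sub>R x) = r *\<^sub>R axis a x" for r and x :: 'b by (simp add: axis_def vec_eq_iff)
  show "norm (axis a x) \<le> norm x * 1" for x :: 'b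
    by (simp add: norm_eq_sqrt_inner inner_axis_axis)
qed

lemma vec_as_sum: "(\<chi> a. w a) = (\<Sum>a\<in>UNIV. axis a (w a))"
  by (simp add: vec_eq_iff axis_def)

lemma hasp_vec:
  fixes G :: "'a::finite \<Rightarrow> real^'n::finite \<Rightarrow> 'b::real_inner"
  assumes "\<And>a. hasp j (G a) y (D a)"
  shows "hasp j (\<lambda>z. \<chi> a. G a z) y (\<chi> a. D a)"
  unfolding vec_as_sum
  by (rule hasp_sum) (use assms in \<open>auto simp: hasp_def intro: bounded_linear.has_vector_derivative[OF bl_axis]\<close>)

lemma flat_abstract:
  fixes \<phi> :: "'a::finite \<Rightarrow> real^'n::finite \<Rightarrow> real^'m::finite"
  assumes U: "open U" and C: "\<And>a. C2 U (\<phi> a)"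
    and orth: "\<And>y a b. y \<in> U \<Longrightarrow> \<phi> a y \<bullet> \<phi> b y = (if a = b then 1 else 0)"
    and comp: "\<And>y v. y \<in> U \<Longrightarrow> v = (\<Sum>c\<in>UNIV. (v \<bullet> \<phi> c y) *\<^sub>R \<phi> c y)"
    and x: "x \<in> U"
  shows "partial j (\<lambda>y. \<chi> a b. \<phi> a y \<bullet> partial l (\<phi> b) y) x
       - partial l (\<lambda>y. \<chi> a b. \<phi> a y \<bullet> partial j (\<phi> b) y) x
       + (\<chi> a b. \<phi> a x \<bullet> partial j (\<phi> b) x) ** (\<chi> a b. \<phi> a x \<bullet> partial l (\<phi> b) x)
       - (\<chi> a b. \<phi> a x \<bullet> partial l (\<phi> b) x) ** (\<chi> a b. \<phi> a x \<bullet> partial j (\<phi> b) x) = 0"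
proof -
  have h1: "hasp i (\<phi> a) y (partial i (\<phi> a) y)" if "y \<in> U" for i a y
    using C that unfolding C2_def by blast
  have h2: "hasp i (partial i' (\<phi> a)) y (partial i (partial i' (\<phi> a)) y)" if "y \<in> U" for i i' a y
    using C that unfolding C2_def by blast
  have sym: "partial i (partial i' (\<phi> a)) y = partial i' (partial i (\<phi> a)) y" if "y \<in> U" for i i' a y
    using C that unfolding C2_def by blast
  have dO: "partial i (\<lambda>y. \<chi> a b. \<phi> a y \<bullet> partial i' (\<phi> b) y) x
     = (\<chi> a b. \<phi> a x \<bullet> partial i (partial i' (\<phi> b)) x + partial i (\<phi> a) x \<bullet> partial i' (\<phi> b) x)" for i i'
    by (intro hasp_partial hasp_vec hasp_inner h1 h2 x)
  have skew: "partial i (\<phi> a) x \<bullet> \<phi> c x = - (\<phi> a x \<bullet> partial i (\<phi> c) x)" for i a c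
  proof -
    have "hasp i (\<lambda>y. \<phi> a y \<bullet> \<phi> c y) x (\<phi> a x \<bullet> partial i (\<phi> c) x + partial i (\<phi> a) x \<bullet> \<phi> c x)"
      by (intro hasp_inner h1 x)
    moreover have "hasp i (\<lambda>y. \<phi> a y \<bullet> \<phi> c y) x 0"
      by (rule hasp_cong[OF U x _ hasp_const[of i "if a = c then 1 else 0"]]) (use orth in auto)
    ultimately show ?thesis using hasp_unique by fastforce
  qed
  have pars: "partial i (\<phi> a) x \<bullet> partial i' (\<phi> b) x
      = - (\<Sum>c\<in>UNIV. (\<phi> a x \<bullet> partial i (\<phi> c) x) * (\<phi> c x \<bullet> partial i' (\<phi> b) x))" for i i' a b
  proof -
    have "partial i (\<phi> a) x \<bullet> partial i' (\<phi> b) x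
       = (\<Sum>c\<in>UNIV. (partial i (\<phi> a) x \<bullet> \<phi> c x) *\<^sub>R \<phi> c x) \<bullet> partial i' (\<phi> b) x"
      using comp[OF x, of "partial i (\<phi> a) x"] by simp
    also have "\<dots> = (\<Sum>c\<in>UNIV. (partial i (\<phi> a) x \<bullet> \<phi> c x) * (\<phi> c x \<bullet> partial i' (\<phi> b) x))"
      by (simp add: inner_sum_left)
    also have "\<dots> = - (\<Sum>c\<in>UNIV. (\<phi> a x \<bullet> partial i (\<phi> c) x) * (\<phi> c x \<bullet> partial i' (\<phi> b) x))"
      by (simp add: skew sum_negf)
    finally show ?thesis .
  qed
  show ?thesis
    unfolding dO
    by (simp add: vec_eq_iff matrix_matrix_mult_def pars sym[OF x, of j l])
qed


lemma eps_sq: "eps idx k i * eps idx k i = 1"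
  by (simp add: eps_def)

lemma sum_single: "(\<And>k. k \<noteq> a \<Longrightarrow> f k = 0) \<Longrightarrow> (\<Sum>k\<in>(UNIV::'a::finite set). f k) = f a"
  by (simp add: sum.remove[of UNIV a] sum.neutral)

lemma EJ: "Ej j ** Jm idx k = (\<chi> i l. if i = l \<and> i = j then eps idx k i else 0)"
  unfolding vec_eq_iff matrix_matrix_mult_def vec_lambda_beta
  by (intro allI, subst sum_single[of j]) (auto simp: Ej_def Jm_def)

lemma JE: "Jm idx k ** Ej j = (\<chi> i l. if i = l \<and> i = j then eps idx k i else 0)"
  unfolding vec_eq_iff matrix_matrix_mult_def vec_lambda_beta
  by (intro allI, subst sum_single[of j]) (auto simp: Ej_def Jm_def)

lemma diag_left: "((\<chi> i l. if i = l \<and> i = j then c i else 0) ** (A::real^'n::finite^'n)) $ i $ l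
   = (if i = j then c i * A $ i $ l else 0)"
  unfolding matrix_matrix_mult_def vec_lambda_beta
  by (subst sum_single[of i]) auto

lemma Ej_right: "((A::real^'n::finite^'n) ** Ej j) $ i $ l = (if l = j then A $ i $ l else 0)"
  unfolding matrix_matrix_mult_def vec_lambda_beta
  by (subst sum_single[of l]) (auto simp: Ej_def)

lemma Ej_left: "(Ej j ** (A::real^'n::finite^'n)) $ i $ l = (if i = j then A $ i $ l else 0)"
  unfolding matrix_matrix_mult_def vec_lambda_beta
  by (subst sum_single[of i]) (auto simp: Ej_def)

lemma Jm_right: "((A::real^'n::finite^'n) ** Jm idx k) $ i $ l = A $ i $ l * eps idx k l"
  unfolding matrix_matrix_mult_def vec_lambda_beta
  by (subst sum_single[of l]) (auto simp: Jm_def)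

lemma diag_mv: "((\<chi> i l. if i = l \<and> i = j then c i else 0) *v (v::real^'n::finite)) $ i
   = (if i = j then c i * v $ i else 0)"
  unfolding matrix_vector_mult_def vec_lambda_beta
  by (subst sum_single[of i]) auto

lemma diag_vm: "((v::real^'n::finite) v* (\<chi> i l. if i = l \<and> i = j then c i else 0)) $ l
   = (if l = j then c l * v $ l else 0)"
  unfolding vector_matrix_mult_def vec_lambda_beta
  by (subst sum_single[of l]) auto

lemma omega_entries:
  "omega idx k u h j y $ Some c $ Some d =
     (if c = j then partial d (u c) y / u d y else 0) - (if d = j then partial c (u d) y / u c y else 0)"
  "omega idx k u h j y $ Some c $ None = - (if c = j then h c y else 0)"
  "omega idx k u h j y $ None $ Some d = (if d = j then h d y else 0)"
  "omega idx k u h j y $ None $ None = 0"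
proof -
  have e: "eps idx k i * (eps idx k i * x) = x" for i x
    by (simp add: mult.assoc[symmetric] eps_sq)
  show "omega idx k u h j y $ Some c $ Some d =
     (if c = j then partial d (u c) y / u d y else 0) - (if d = j then partial c (u d) y / u c y else 0)"
    unfolding omega_def block_def
    by (simp add: EJ JE diag_left Ej_right Jm_right Fm_def e eps_sq transpose_def)
  show "omega idx k u h j y $ Some c $ None = - (if c = j then h c y else 0)"
    unfolding omega_def block_def
    by (simp add: EJ diag_mv gam_def e)
  show "omega idx k u h j y $ None $ Some d = (if d = j then h d y else 0)"
    unfolding omega_def block_def
    by (simp add: JE diag_vm gam_def e)
  show "omega idx k u h j y $ None $ None = 0"
    unfolding omega_def block_def by simp
qed


theorem lemma4p2:
  fixes U :: "(real^'n::finite) set"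
    and f :: "real^'n \<Rightarrow> real^'m::finite"
    and N :: "real^'n \<Rightarrow> real^'m"
    and u h :: "'n \<Rightarrow> real^'n \<Rightarrow> real"
    and idx :: "'n \<Rightarrow> nat"
    and k :: nat
  assumes n2: "CARD('n) \<ge> 2"
    and k1: "1 \<le> k" and k2: "k \<le> CARD('n) - 1"
    and dimm: "CARD('m) = CARD('n) + 1"
    and idx: "bij_betw idx UNIV {..<CARD('n)}"
    and U: "open U"
    and f_smooth: "smooth_on U f"
    and immersed: "\<forall>x\<in>U. \<forall>v::real^'n. (\<Sum>j\<in>UNIV. v $ j *\<^sub>R partial j f x) = 0 \<longrightarrow> v = 0"
    and N_smooth: "smooth_on U N"
    and N_unit: "\<forall>x\<in>U. norm (N x) = 1"
    and N_normal: "\<forall>x\<in>U. \<forall>i. inner (N x) (partial i f x) = 0"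
    and u_smooth: "\<forall>i. smooth_on U (u i)"
    and h_smooth: "\<forall>i. smooth_on U (h i)"
    and I_form: "\<forall>x\<in>U. \<forall>i j. inner (partial i f x) (partial j f x) = (if i = j then (u i x)\<^sup>2 else 0)"
    and II_form: "\<forall>x\<in>U. \<forall>i j. inner (partial j (partial i f) x) (N x) = (if i = j then u i x * h i x else 0)"
    and null: "\<forall>x\<in>U. (\<Sum>i\<in>UNIV. eps idx k i * (u i x)\<^sup>2) = 0"
  shows "(\<forall>x\<in>U. \<forall>j l. partial j (omega idx k u h l) x - partial l (omega idx k u h j) x
              + omega idx k u h j x ** omega idx k u h l x - omega idx k u h l x ** omega idx k u h j x = 0)
       \<and> (\<forall>x\<in>U. \<forall>j. (\<chi> i. partial j (u i) x) = (\<chi> i. u i x) v* tau idx k u j x)"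
proof -
  have fb: "smooth_on U (partial b f)" for b using smooth_partial[OF f_smooth] .
  have us: "smooth_on U (u i)" for i using u_smooth by blast
  have nz: "u b y \<noteq> 0" if y: "y \<in> U" for b y
  proof
    assume 0: "u b y = 0"
    have "partial b f y \<bullet> partial b f y = 0" using I_form y 0 by simp
    hence pb: "partial b f y = 0" by simp
    have "(\<Sum>j\<in>UNIV. (axis b 1 :: real^'n) $ j *\<^sub>R partial j f y) = partial b f y"
      by (subst sum_single[of b]) (auto simp: axis_def)
    hence "axis b (1::real) = 0" using immersed[rule_format, OF y, of "axis b 1"] pb by simp
    thus False by simp
  qed
  have D: "partial j (partial a f) y \<bullet> partial b f y + partial a f y \<bullet> partial j (partial b f) y
      = (if a = b then 2 * (u a y * partial j (u a) y) else 0)" if y: "y \<in> U" for a b j y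
  proof -
    have 1: "hasp j (\<lambda>z. partial a f z \<bullet> partial b f z) y
        (partial a f y \<bullet> partial j (partial b f) y + partial j (partial a f) y \<bullet> partial b f y)"
      by (intro hasp_inner smooth_hasp0[OF fb y])
    have 2: "hasp j (\<lambda>z. partial a f z \<bullet> partial b f z) y
        (if a = b then u a y * partial j (u a) y + partial j (u a) y * u a y else 0)"
    proof (rule hasp_cong[OF U y])
      show "z \<in> U \<Longrightarrow> (if a = b then u a z * u a z else 0) = partial a f z \<bullet> partial b f z" for z
        using I_form by (simp add: power2_eq_square)
      show "hasp j (\<lambda>z. if a = b then u a z * u a z else 0) y
          (if a = b then u a y * partial j (u a) y + partial j (u a) y * u a y else 0)"
        using hasp_mult[OF smooth_hasp0[OF us y, of j a] smooth_hasp0[OF us y, of j a]] hasp_const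
        by (cases "a = b") simp_all
    qed
    from hasp_unique[OF 1 2] show ?thesis by (auto simp: algebra_simps)
  qed
  have symf: "partial j (partial b f) y = partial b (partial j f) y" if y: "y \<in> U" for j b y
    using schwarz_smooth[OF U f_smooth y] by blast
  have T: "partial a f y \<bullet> partial j (partial b f) y =
      (if a = b then u a y * partial j (u a) y else 0) + (if a = j then u a y * partial b (u a) y else 0)
      - (if b = j then u b y * partial a (u b) y else 0)" if y: "y \<in> U" for a b j y
  proof -
    define T where "T a b j = partial a f y \<bullet> partial j (partial b f) y" for a b j
    define Dv where "Dv a b j = (if a = b then 2 * (u a y * partial j (u a) y) else 0)" for a b j
    have e1: "T a b j + T b a j = Dv a b j" for a b j
      using D[OF y, of j a b] by (simp add: T_def Dv_def inner_commute add.commute)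
    have e2: "T a b j = T a j b" for a b j using symf[OF y] by (simp add: T_def)
    have "2 * T a b j = Dv a b j + Dv a j b - Dv b j a"
      using e1[of a b j] e1[of a j b] e1[of b j a] e2[of a b j] e2[of b a j] e2[of j a b] by linarith
    then show ?thesis unfolding T_def Dv_def by (auto split: if_splits)
  qed
  have NN: "N y \<bullet> N y = 1" if "y \<in> U" for y
    using N_unit that by (simp add: dot_square_norm)
  have N1: "N y \<bullet> partial j N y = 0" if y: "y \<in> U" for j y
  proof -
    have 1: "hasp j (\<lambda>z. N z \<bullet> N z) y (N y \<bullet> partial j N y + partial j N y \<bullet> N y)"
      by (intro hasp_inner smooth_hasp0[OF N_smooth y])
    have 2: "hasp j (\<lambda>z. N z \<bullet> N z) y 0"
      by (rule hasp_cong[OF U y _ hasp_const[of j 1]]) (use NN in auto)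
    from hasp_unique[OF 1 2] show ?thesis by (simp add: inner_commute)
  qed
  have N2: "partial b f y \<bullet> partial j N y = - (if b = j then u b y * h b y else 0)" if y: "y \<in> U" for j b y
  proof -
    have 1: "hasp j (\<lambda>z. N z \<bullet> partial b f z) y (N y \<bullet> partial j (partial b f) y + partial j N y \<bullet> partial b f y)"
      by (intro hasp_inner smooth_hasp0[OF N_smooth y] smooth_hasp0[OF fb y])
    have 2: "hasp j (\<lambda>z. N z \<bullet> partial b f z) y 0"
      by (rule hasp_cong[OF U y _ hasp_const[of j 0]]) (use N_normal in auto)
    from hasp_unique[OF 1 2] II_form y show ?thesis
      by (simp add: inner_commute)
  qed
  have N3: "N y \<bullet> partial j (partial b f) y = (if b = j then u b y * h b y else 0)" if y: "y \<in> U" for j b y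
    using II_form y by (simp add: inner_commute)
  define \<phi> :: "'n option \<Rightarrow> real^'n \<Rightarrow> real^'m" where
    "\<phi> a = (case a of None \<Rightarrow> N | Some b \<Rightarrow> (\<lambda>y. (1 / u b y) *\<^sub>R partial b f y))" for a
  have C: "C2 U (\<phi> a)" for a
  proof (cases a)
    case None then show ?thesis by (simp add: \<phi>_def C2_smooth[OF U N_smooth])
  next
    case (Some b)
    then show ?thesis
      unfolding \<phi>_def using C2_scaleR[OF U C2_inv[OF U C2_smooth[OF U us] nz] C2_smooth[OF U fb]] by simp
  qed
  have orth: "\<phi> a y \<bullet> \<phi> b y = (if a = b then 1 else 0)" if y: "y \<in> U" for a b y
  proof (cases a; cases b)
    fix c d assume "a = Some c" "b = Some d"
    then show ?thesis using I_form y nz[OF y] by (simp add: \<phi>_def power2_eq_square)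
  next
    fix c assume "a = Some c" "b = None"
    then show ?thesis using N_normal y by (simp add: \<phi>_def inner_commute)
  next
    fix d assume "a = None" "b = Some d"
    then show ?thesis using N_normal y by (simp add: \<phi>_def)
  qed (use NN y in \<open>simp add: \<phi>_def\<close>)
  have comp: "v = (\<Sum>c\<in>UNIV. (v \<bullet> \<phi> c y) *\<^sub>R \<phi> c y)" if y: "y \<in> U" for y v
  proof -
    define B where "B = range (\<lambda>c. \<phi> c y)"
    have inj: "inj (\<lambda>c. \<phi> c y)"
    proof (rule injI)
      fix a b assume "\<phi> a y = \<phi> b y"
      then have "\<phi> a y \<bullet> \<phi> b y = 1" using orth[OF y, of a a] by simp
      then show "a = b" using orth[OF y, of a b] by (auto split: if_splits)
    qed
    have po: "pairwise orthogonal B"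
      unfolding B_def pairwise_def orthogonal_def using orth[OF y] by auto
    have n1: "norm i = 1" if "i \<in> B" for i
      using that orth[OF y] unfolding B_def by (auto simp: norm_eq_1)
    have ind: "independent B"
      by (rule pairwise_orthogonal_independent[OF po]) (use n1 in force)
    have cardB: "card B = CARD('m)"
      unfolding B_def using card_image[OF inj] dimm by simp
    have "UNIV \<subseteq> span B"
      by (rule card_ge_dim_independent[OF _ ind]) (simp_all add: cardB)
    then have "(\<Sum>i\<in>B. (v \<bullet> i) *\<^sub>R i) = v"
      by (intro orthonormal_basis_expand[OF po n1]) (auto simp: B_def)
    then show ?thesis unfolding B_def by (simp add: sum.reindex[OF inj])
  qed
  have pS: "partial j (\<phi> (Some d)) y = (1 / u d y) *\<^sub>R partial j (partial d f) y
      + (- partial j (u d) y / (u d y)^2) *\<^sub>R partial d f y" if y: "y \<in> U" for j d y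
    unfolding \<phi>_def option.simps
    by (rule hasp_partial[OF hasp_scaleR[OF hasp_inv[OF smooth_hasp0[OF us y] nz[OF y]] smooth_hasp0[OF fb y]]])
  have pN: "partial j (\<phi> None) y = partial j N y" for j y by (simp add: \<phi>_def)
  have Oeq: "omega idx k u h j y = (\<chi> a b. \<phi> a y \<bullet> partial j (\<phi> b) y)" if y: "y \<in> U" for j y
  proof -
    have "omega idx k u h j y $ a $ b = \<phi> a y \<bullet> partial j (\<phi> b) y" for a b
    proof (cases a; cases b)
      fix c d assume ab: "a = Some c" "b = Some d"
      have "\<phi> a y \<bullet> partial j (\<phi> b) y = (1 / u c y) * (1 / u d y) * (partial c f y \<bullet> partial j (partial d f) y)
          + (1 / u c y) * (- partial j (u d) y / (u d y)^2) * (partial c f y \<bullet> partial d f y)"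
        unfolding ab pS[OF y] using nz[OF y, of c] nz[OF y, of d]
        by (simp add: \<phi>_def inner_add_right inner_diff_right field_simps)
      also have "\<dots> = (if c = j then partial d (u c) y / u d y else 0) - (if d = j then partial c (u d) y / u c y else 0)"
        unfolding T[OF y] using I_form y nz[OF y, of c] nz[OF y, of d]
        by (cases "c = d"; cases "c = j"; cases "d = j") (simp_all add: field_simps power2_eq_square)
      finally show ?thesis unfolding ab omega_entries by simp
    next
      fix c assume ab: "a = Some c" "b = None"
      show ?thesis unfolding ab omega_entries pN using N2[OF y, of c j] nz[OF y, of c]
        by (auto simp add: \<phi>_def)
    next
      fix d assume ab: "a = None" "b = Some d"
      show ?thesis unfolding ab omega_entries pS[OF y] using N3[OF y, of j d] nz[OF y, of d] N_normal y
        by (auto simp add: \<phi>_def inner_add_right inner_diff_right)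
    next
      assume ab: "a = None" "b = None"
      show ?thesis unfolding ab omega_entries pN using N1[OF y, of j] by (simp add: \<phi>_def)
    qed
    then show ?thesis by (simp add: vec_eq_iff)
  qed
  have partA: "partial j (omega idx k u h l) x - partial l (omega idx k u h j) x
              + omega idx k u h j x ** omega idx k u h l x - omega idx k u h l x ** omega idx k u h j x = 0"
    if x: "x \<in> U" for x j l
  proof -
    have "partial j (omega idx k u h l) x = partial j (\<lambda>y. \<chi> a b. \<phi> a y \<bullet> partial l (\<phi> b) y) x"
      by (rule partial_cong[OF U x]) (simp add: Oeq)
    moreover have "partial l (omega idx k u h j) x = partial l (\<lambda>y. \<chi> a b. \<phi> a y \<bullet> partial j (\<phi> b) y) x"
      by (rule partial_cong[OF U x]) (simp add: Oeq)
    ultimately show ?thesis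
      using flat_abstract[OF U C orth comp x, of j l] by (simp add: Oeq[OF x])
  qed
  have S0: "(\<Sum>a\<in>UNIV. eps idx k a * (u a x * partial j (u a) x)) = 0" if x: "x \<in> U" for x j
  proof -
    have 1: "hasp j (\<lambda>z. \<Sum>a\<in>UNIV. eps idx k a * (u a z * u a z)) x
       (\<Sum>a\<in>UNIV. eps idx k a * (u a x * partial j (u a) x + partial j (u a) x * u a x) + 0 * (u a x * u a x))"
      by (rule hasp_sum, rule hasp_mult[OF hasp_const hasp_mult[OF smooth_hasp0[OF us x] smooth_hasp0[OF us x]]])
    have 2: "hasp j (\<lambda>z. \<Sum>a\<in>UNIV. eps idx k a * (u a z * u a z)) x 0"
      by (rule hasp_cong[OF U x _ hasp_const[of j 0]]) (use null in \<open>auto simp: power2_eq_square\<close>)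
    have "(\<Sum>a\<in>UNIV. eps idx k a * (u a x * partial j (u a) x + partial j (u a) x * u a x) + 0 * (u a x * u a x)) = 0"
      using hasp_unique[OF 1 2] .
    moreover have "(\<Sum>a\<in>UNIV. eps idx k a * (u a x * partial j (u a) x + partial j (u a) x * u a x) + 0 * (u a x * u a x))
        = 2 * (\<Sum>a\<in>UNIV. eps idx k a * (u a x * partial j (u a) x))"
      by (simp add: sum_distrib_left algebra_simps)
    ultimately show ?thesis by simp
  qed
  have partB: "(\<chi> i. partial j (u i) x) = (\<chi> i. u i x) v* tau idx k u j x" if x: "x \<in> U" for x j
  proof -
    have tau_e: "tau idx k u j x $ a $ i = - ((if a = j then Fm idx k u x $ i $ a else 0) * eps idx k i)
        + (if i = j then Fm idx k u x $ a $ i else 0) * eps idx k i" for a i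
      by (simp add: tau_def Jm_right Ej_left Ej_right transpose_def)
    have "partial j (u i) x = (\<Sum>a\<in>UNIV. tau idx k u j x $ a $ i * u a x)" for i
    proof (cases "i = j")
      case False
      have "(\<Sum>a\<in>UNIV. tau idx k u j x $ a $ i * u a x) = tau idx k u j x $ j $ i * u j x"
        by (rule sum_single) (simp add: tau_e False)
      also have "\<dots> = partial j (u i) x"
        using False nz[OF x, of j] by (simp add: tau_e Fm_def eps_def)
      finally show ?thesis by simp
    next
      case True
      define c where "c = - eps idx k j / u j x"
      have pt: "tau idx k u j x $ a $ j * u a x = c * (eps idx k a * (u a x * partial j (u a) x))
          - (if a = j then c * (eps idx k a * (u a x * partial j (u a) x)) else 0)" for a
        using nz[OF x, of j] by (cases "a = j") (simp_all add: tau_e Fm_def c_def field_simps)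
      have "(\<Sum>a\<in>UNIV. tau idx k u j x $ a $ j * u a x)
          = c * (\<Sum>a\<in>UNIV. eps idx k a * (u a x * partial j (u a) x)) - c * (eps idx k j * (u j x * partial j (u j) x))"
        unfolding pt by (simp add: sum_subtractf sum_distrib_left)
      also have "\<dots> = partial j (u j) x"
        unfolding S0[OF x] c_def using nz[OF x, of j] by (simp add: eps_def)
      finally show ?thesis using True by simp
    qed
    then show ?thesis by (simp add: vec_eq_iff vector_matrix_mult_def mult.commute)
  qed
  show ?thesis using partA partB by blast
qed
end
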